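(* Let $A\subseteq\mathbb{Z}^d$ be finite such that $\delta_A$ is a spectral measure, and let $\nu$ be a Borel probability measure on $\mathbb{R}^d$ which is spectral with a spectrum contained in $\mathbb{Z}^d$. Then $\mu=\delta_A*\nu$ is a spectral measure.
   Context: $\delta_A=\frac{1}{\#A}\sum_{a\in A}\delta_a$. A Borel probability measure $\mu$ on $\mathbb{R}^d$ is spectral if there is a countable $\Lambda\subseteq\mathbb{R}^d$ (a spectrum) such that $\{e^{2\pi i\lambda\cdot x}:\lambda\in\Lambda\}$ is an orthonormal basis of $L^2(\mu)$. *)

theory Defs
  imports "HOL-Analysis.Analysis" "HOL-Probability.Probability"
begin

definition expo :: "real^'n \<Rightarrow> real^'n \<Rightarrow> complex" where
  "expo l x = exp (2 * complex_of_real pi * \<i> * complex_of_real (l \<bullet> x))"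

definition is_spectrum :: "(real^'n) measure \<Rightarrow> (real^'n) set \<Rightarrow> bool" where
  "is_spectrum \<mu> \<Lambda> \<longleftrightarrow>
     (\<forall>l\<in>\<Lambda>. \<forall>l'\<in>\<Lambda>.
        (\<integral>x. expo l x * cnj (expo l' x) \<partial>\<mu>) = (if l = l' then 1 else 0)) \<and>
     (\<forall>f :: real^'n \<Rightarrow> complex.
        f \<in> borel_measurable \<mu> \<and> integrable \<mu> (\<lambda>x. (cmod (f x))\<^sup>2) \<and>
        (\<forall>l\<in>\<Lambda>. (\<integral>x. f x * cnj (expo l x) \<partial>\<mu>) = 0)
        \<longrightarrow> (AE x in \<mu>. f x = 0))"

definition spectral :: "(real^'n) measure \<Rightarrow> bool" where
  "spectral \<mu> \<longleftrightarrow> prob_space \<mu> \<and> sets \<mu> = sets borel \<and>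
     (\<exists>\<Lambda>. countable \<Lambda> \<and> is_spectrum \<mu> \<Lambda>)"

definition delta_set :: "(real^'n) set \<Rightarrow> (real^'n) measure" where
  "delta_set A = measure_of UNIV (sets borel)
     (\<lambda>S. ennreal (real (card (A \<inter> S)) / real (card A)))"

definition int_lattice :: "(real^'n) set" where
  "int_lattice = {x. \<forall>i. x $ i \<in> \<int>}"

end

theory Submission
  imports Defs
begin


lemma delta_set_eq:
  fixes A :: "(real^'n) set"
  assumes "finite A" "A \<noteq> {}"
  shows "delta_set A = distr (uniform_count_measure A) borel (\<lambda>x. x)"
proof -
  let ?D = "distr (uniform_count_measure A) borel (\<lambda>x. x)"
  have meas: "(\<lambda>x. x) \<in> measurable (uniform_count_measure A) borel"
    by (simp add: measurable_def sets_uniform_count_measure space_uniform_count_measure)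
  have "?D = measure_of (space ?D) (sets ?D) (emeasure ?D)" by (rule measure_of_of_measure[symmetric])
  also have "\<dots> = measure_of UNIV (sets borel) (emeasure ?D)" by simp
  also have "\<dots> = delta_set A"
    unfolding delta_set_def
  proof (rule measure_of_eq)
    show "sets borel \<subseteq> Pow UNIV" by simp
    fix S :: "(real^'n) set" assume "S \<in> sigma_sets UNIV (sets borel)"
    then have S: "S \<in> sets borel" by (metis sets.sigma_sets_eq space_borel)
    have "emeasure ?D S = emeasure (uniform_count_measure A) (S \<inter> A)"
      using S meas by (simp add: emeasure_distr space_uniform_count_measure)
    also have "\<dots> = card (S \<inter> A) / card A"
      using assms by (simp add: emeasure_uniform_count_measure)
    also have "\<dots> = ennreal (real (card (A \<inter> S)) / real (card A))"
      by (simp add: Int_commute divide_ennreal ennreal_of_nat_eq_real_of_nat)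
    finally show "emeasure ?D S = ennreal (real (card (A \<inter> S)) / real (card A))" .
  qed
  finally show ?thesis ..
qed

lemma delta_nn:
  fixes A :: "(real^'n) set" and h :: "real^'n \<Rightarrow> ennreal"
  assumes "finite A" "A \<noteq> {}" and h: "h \<in> borel_measurable borel"
  shows "(\<integral>\<^sup>+x. h x \<partial>delta_set A) = ennreal (1 / real (card A)) * (\<Sum>a\<in>A. h a)"
proof -
  have meas: "(\<lambda>x. x) \<in> measurable (uniform_count_measure A) borel"
    by (simp add: measurable_def sets_uniform_count_measure space_uniform_count_measure)
  have "(\<integral>\<^sup>+x. h x \<partial>delta_set A) = (\<integral>\<^sup>+x. h x \<partial>uniform_count_measure A)"
    using assms meas by (simp add: delta_set_eq nn_integral_distr)
  also have "\<dots> = (\<Sum>a\<in>A. ennreal (1 / real (card A)) * h a)"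
    using assms by (simp add: uniform_count_measure_def nn_integral_point_measure_finite)
  also have "\<dots> = ennreal (1 / real (card A)) * (\<Sum>a\<in>A. h a)"
    by (simp add: sum_distrib_left)
  finally show ?thesis .
qed

lemma delta_integral:
  fixes A :: "(real^'n) set" and h :: "real^'n \<Rightarrow> complex"
  assumes "finite A" "A \<noteq> {}" and h: "h \<in> borel_measurable borel"
  shows "(\<integral>x. h x \<partial>delta_set A) = (\<Sum>a\<in>A. h a) / of_nat (card A)"
proof -
  have meas: "(\<lambda>x. x) \<in> measurable (uniform_count_measure A) borel"
    by (simp add: measurable_def sets_uniform_count_measure space_uniform_count_measure)
  have "(\<integral>x. h x \<partial>delta_set A) = (\<integral>x. h x \<partial>uniform_count_measure A)"
    using assms meas by (simp add: delta_set_eq integral_distr)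
  also have "\<dots> = (\<Sum>a\<in>A. h a) / of_nat (card A)"
    using assms by (simp add: uniform_count_measure_def lebesgue_integral_point_measure_finite
        scaleR_conv_of_real sum_divide_distrib)
  finally show ?thesis .
qed

lemma delta_integrable:
  fixes A :: "(real^'n) set" and h :: "real^'n \<Rightarrow> 'b::{banach, second_countable_topology}"
  assumes "finite A" "A \<noteq> {}" and h: "h \<in> borel_measurable borel"
  shows "integrable (delta_set A) h"
proof -
  have "(\<integral>\<^sup>+x. ennreal (norm (h x)) \<partial>delta_set A) = ennreal (1 / real (card A)) * (\<Sum>a\<in>A. ennreal (norm (h a)))"
    using assms by (intro delta_nn) auto
  also have "\<dots> < \<infinity>"
    using assms by (simp add: ennreal_mult_eq_top_iff less_top[symmetric])
  finally show ?thesis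
    using h assms by (simp add: integrable_iff_bounded delta_set_eq)
qed

lemma delta_AE:
  fixes A :: "(real^'n) set"
  assumes "finite A" "A \<noteq> {}" and ae: "AE x in delta_set A. P x" and a: "a \<in> A"
  shows "P a"
proof -
  obtain N where N: "{x \<in> space (delta_set A). \<not> P x} \<subseteq> N" "emeasure (delta_set A) N = 0" "N \<in> sets (delta_set A)"
    using ae by (auto elim!: AE_E)
  have meas: "(\<lambda>x. x) \<in> measurable (uniform_count_measure A) borel"
    by (simp add: measurable_def sets_uniform_count_measure space_uniform_count_measure)
  have "emeasure (delta_set A) N = emeasure (uniform_count_measure A) (N \<inter> A)"
    using N(3) assms meas by (simp add: delta_set_eq emeasure_distr space_uniform_count_measure)
  also have "\<dots> = card (N \<inter> A) / card A"
    using assms by (simp add: emeasure_uniform_count_measure)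
  finally have "card (N \<inter> A) = 0" using N(2) assms by simp
  then have "N \<inter> A = {}" using assms by simp
  moreover have "space (delta_set A) = UNIV" using assms by (simp add: delta_set_eq)
  then have "\<not> P a \<Longrightarrow> a \<in> N" using N(1) by auto
  ultimately show ?thesis using a by blast
qed


lemma delta_prob:
  fixes A :: "(real^'n) set"
  assumes "finite A" "A \<noteq> {}"
  shows "prob_space (delta_set A)" and "sets (delta_set A) = sets borel"
  using assms by (auto simp: delta_set_eq intro!: prob_space.prob_space_distr prob_space_uniform_count_measure
      simp: measurable_def sets_uniform_count_measure space_uniform_count_measure)

lemma conv_nn:
  fixes A :: "(real^'n) set" and g :: "real^'n \<Rightarrow> ennreal"
  assumes "finite A" "A \<noteq> {}" and P: "prob_space \<nu>" and S: "sets \<nu> = sets borel"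
    and g: "g \<in> borel_measurable borel"
  shows "(\<integral>\<^sup>+x. g x \<partial>(delta_set A \<star> \<nu>)) = ennreal (1 / real (card A)) * (\<Sum>a\<in>A. \<integral>\<^sup>+y. g (a + y) \<partial>\<nu>)"
proof -
  interpret N: prob_space \<nu> by fact
  interpret D: prob_space "delta_set A" using delta_prob assms by blast
  have Ds: "sets (delta_set A) = sets borel" using delta_prob assms by blast
  have "(\<integral>\<^sup>+x. g x \<partial>(delta_set A \<star> \<nu>)) = (\<integral>\<^sup>+x. \<integral>\<^sup>+y. g (x + y) \<partial>\<nu> \<partial>delta_set A)"
    by (rule nn_integral_convolution) (auto simp: S Ds g D.finite_measure_axioms N.finite_measure_axioms)
  also have "\<dots> = ennreal (1 / real (card A)) * (\<Sum>a\<in>A. \<integral>\<^sup>+y. g (a + y) \<partial>\<nu>)"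
  proof (rule delta_nn[OF assms(1,2)])
    have [measurable_cong]: "sets \<nu> = sets borel" by fact
    show "(\<lambda>x. \<integral>\<^sup>+y. g (x + y) \<partial>\<nu>) \<in> borel_measurable borel"
      using g by measurable
  qed
  finally show ?thesis .
qed

lemma conv_integral:
  fixes A :: "(real^'n) set" and g :: "real^'n \<Rightarrow> complex"
  assumes "finite A" "A \<noteq> {}" and P: "prob_space \<nu>" and S: "sets \<nu> = sets borel"
    and g: "g \<in> borel_measurable borel" and int: "integrable (delta_set A \<star> \<nu>) g"
  shows "(\<integral>x. g x \<partial>(delta_set A \<star> \<nu>)) = (\<Sum>a\<in>A. \<integral>y. g (a + y) \<partial>\<nu>) / of_nat (card A)"
proof -
  interpret N: prob_space \<nu> by fact
  interpret D: prob_space "delta_set A" using delta_prob assms by blast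
  interpret pair_sigma_finite "delta_set A" \<nu> ..
  have Ds[measurable_cong]: "sets (delta_set A) = sets borel" using delta_prob assms by blast
  have [measurable_cong]: "sets \<nu> = sets borel" by fact
  have m: "(\<lambda>(x, y). x + y) \<in> measurable (delta_set A \<Otimes>\<^sub>M \<nu>) (borel :: (real^'n) measure)"
    by measurable
  have int2: "integrable (delta_set A \<Otimes>\<^sub>M \<nu>) (\<lambda>p. g (case p of (x, y) \<Rightarrow> x + y))"
    using int m g unfolding convolution_def by (subst integrable_distr_eq[symmetric]) auto
  have "(\<integral>x. g x \<partial>(delta_set A \<star> \<nu>)) = (\<integral>p. g (case p of (x, y) \<Rightarrow> x + y) \<partial>(delta_set A \<Otimes>\<^sub>M \<nu>))"
    unfolding convolution_def using m g by (rule integral_distr)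
  also have "\<dots> = (\<integral>x. \<integral>y. g (x + y) \<partial>\<nu> \<partial>delta_set A)"
    using integral_fst'[OF int2] by simp
  also have "\<dots> = (\<Sum>a\<in>A. \<integral>y. g (a + y) \<partial>\<nu>) / of_nat (card A)"
  proof (rule delta_integral[OF assms(1,2)])
    show "(\<lambda>x. \<integral>y. g (x + y) \<partial>\<nu>) \<in> borel_measurable borel"
      using g by measurable
  qed
  finally show ?thesis .
qed

lemma conv_integrable_shift:
  fixes A :: "(real^'n) set" and g :: "real^'n \<Rightarrow> 'b::{banach, second_countable_topology}"
  assumes "finite A" "A \<noteq> {}" and P: "prob_space \<nu>" and S: "sets \<nu> = sets borel"
    and g: "g \<in> borel_measurable borel" and int: "integrable (delta_set A \<star> \<nu>) g" and a: "a \<in> A"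
  shows "integrable \<nu> (\<lambda>y. g (a + y))"
proof -
  have [measurable_cong]: "sets \<nu> = sets borel" by fact
  have "(\<integral>\<^sup>+x. ennreal (norm (g x)) \<partial>(delta_set A \<star> \<nu>)) < \<infinity>"
    using int by (simp add: integrable_iff_bounded)
  also have "(\<integral>\<^sup>+x. ennreal (norm (g x)) \<partial>(delta_set A \<star> \<nu>)) =
      ennreal (1 / real (card A)) * (\<Sum>a\<in>A. \<integral>\<^sup>+y. ennreal (norm (g (a + y))) \<partial>\<nu>)"
    using assms by (intro conv_nn) auto
  finally have lt: "ennreal (1 / real (card A)) * (\<Sum>a\<in>A. \<integral>\<^sup>+y. ennreal (norm (g (a + y))) \<partial>\<nu>) < \<infinity>" .
  have c0: "ennreal (1 / real (card A)) \<noteq> 0" using assms by (simp add: card_gt_0_iff)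
  have "(\<Sum>a\<in>A. \<integral>\<^sup>+y. ennreal (norm (g (a + y))) \<partial>\<nu>) \<noteq> \<infinity>"
  proof
    assume "(\<Sum>a\<in>A. \<integral>\<^sup>+y. ennreal (norm (g (a + y))) \<partial>\<nu>) = \<infinity>"
    then have "ennreal (1 / real (card A)) * (\<Sum>a\<in>A. \<integral>\<^sup>+y. ennreal (norm (g (a + y))) \<partial>\<nu>) = \<infinity>"
      using c0 by (simp add: ennreal_mult_eq_top_iff)
    with lt show False by simp
  qed
  then have "(\<integral>\<^sup>+y. ennreal (norm (g (a + y))) \<partial>\<nu>) < \<infinity>"
    using assms by (simp add: less_top)
  moreover have "(\<lambda>y. g (a + y)) \<in> borel_measurable \<nu>" using g by measurable
  ultimately show ?thesis by (simp add: integrable_iff_bounded)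
qed

lemma conv_AE_zero:
  fixes A :: "(real^'n) set" and f :: "real^'n \<Rightarrow> complex"
  assumes "finite A" "A \<noteq> {}" and P: "prob_space \<nu>" and S: "sets \<nu> = sets borel"
    and f: "f \<in> borel_measurable borel" and ae: "AE y in \<nu>. \<forall>a\<in>A. f (a + y) = 0"
  shows "AE x in (delta_set A \<star> \<nu>). f x = 0"
proof -
  have [measurable_cong]: "sets \<nu> = sets borel" by fact
  have "(\<integral>\<^sup>+x. ennreal (norm (f x)) \<partial>(delta_set A \<star> \<nu>)) =
      ennreal (1 / real (card A)) * (\<Sum>a\<in>A. \<integral>\<^sup>+y. ennreal (norm (f (a + y))) \<partial>\<nu>)"
    using assms by (intro conv_nn) auto
  also have "\<dots> = 0"
  proof -
    have "(\<integral>\<^sup>+y. ennreal (norm (f (a + y))) \<partial>\<nu>) = 0" if "a \<in> A" for a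
      using ae that by (intro nn_integral_zero') (auto elim!: eventually_mono)
    then show ?thesis by simp
  qed
  finally have "AE x in (delta_set A \<star> \<nu>). ennreal (norm (f x)) = 0"
    using f by (subst nn_integral_0_iff_AE[symmetric]) auto
  then show ?thesis by (auto elim!: eventually_mono)
qed




lemma expo_add_right: "expo l (x + y) = expo l x * expo l y"
  unfolding expo_def by (simp add: inner_add_right distrib_left exp_add[symmetric])

lemma expo_add_left: "expo (l + m) x = expo l x * expo m x"
  unfolding expo_def by (simp add: inner_add_left distrib_left exp_add[symmetric])

lemma norm_expo[simp]: "cmod (expo l x) = 1"
  unfolding expo_def by (simp add: norm_exp_eq_Re)

lemma expo_cnj_self[simp]: "expo l x * cnj (expo l x) = 1"
proof -
  have "expo l x * cnj (expo l x) = complex_of_real ((cmod (expo l x))\<^sup>2)"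
    by (rule complex_norm_square[symmetric])
  then show ?thesis by simp
qed

lemma expo_nonzero[simp]: "expo l x \<noteq> 0"
  unfolding expo_def by simp

lemma expo_cancel: "expo (g + m) y * cnj (expo (g + m') y) = expo m y * cnj (expo m' y)"
proof -
  have "expo (g + m) y * cnj (expo (g + m') y) = (expo g y * cnj (expo g y)) * (expo m y * cnj (expo m' y))"
    by (simp add: expo_add_left mult_ac)
  then show ?thesis by simp
qed

lemma expo_int:
  assumes "l \<in> int_lattice" "x \<in> int_lattice"
  shows "expo l x = 1"
proof -
  have "l \<bullet> x = (\<Sum>i\<in>UNIV. l $ i * x $ i)" by (simp add: inner_vec_def)
  also have "\<dots> \<in> \<int>" using assms unfolding int_lattice_def by (intro Ints_sum Ints_mult) auto
  finally have "l \<bullet> x \<in> \<int>" .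
  then obtain k where k: "l \<bullet> x = of_int k" by (auto elim: Ints_cases)
  have "exp ((2 * of_int k * pi) * \<i>) = 1"
    by (intro exp_integer_2pi) simp
  then show ?thesis unfolding expo_def k by (simp add: mult_ac)
qed

lemma expo_measurable[measurable]: "expo l \<in> borel_measurable borel"
  unfolding expo_def by measurable

lemma cnj_expo: "cnj (expo l x) = expo (-l) x"
  unfolding expo_def by (simp add: exp_cnj)

lemma cnj_expo_measurable[measurable]: "(\<lambda>x. cnj (expo l x)) \<in> borel_measurable borel"
  unfolding cnj_expo by (rule expo_measurable)

lemma real_le_1_plus_sq: "t \<le> 1 + t\<^sup>2" for t :: real
proof -
  have h: "0 \<le> (t - 1/2) * (t - 1/2)" by simp
  have e: "(t - 1/2) * (t - 1/2) = t * t - t + 1/4" by (simp add: algebra_simps)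
  show ?thesis unfolding power2_eq_square using h e by linarith
qed

lemma L2_integrable:
  fixes f :: "'a \<Rightarrow> complex"
  assumes "prob_space M" "f \<in> borel_measurable M" "integrable M (\<lambda>x. (cmod (f x))\<^sup>2)"
  shows "integrable M f"
proof (rule Bochner_Integration.integrable_bound)
  interpret prob_space M by fact
  show "integrable M (\<lambda>x. 1 + (cmod (f x))\<^sup>2)" using assms by simp
  show "f \<in> borel_measurable M" by fact
  show "AE x in M. norm (f x) \<le> norm (1 + (cmod (f x))\<^sup>2)"
  proof (rule AE_I2)
    fix x
    have "cmod (f x) \<le> 1 + (cmod (f x))\<^sup>2" by (rule real_le_1_plus_sq)
    then show "norm (f x) \<le> norm (1 + (cmod (f x))\<^sup>2)" by simp
  qed
qed

lemma integrable_mult_bdd: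
  fixes h k :: "'a \<Rightarrow> complex"
  assumes "integrable M h" "k \<in> borel_measurable M" "\<And>x. cmod (k x) \<le> 1"
  shows "integrable M (\<lambda>x. h x * k x)"
proof (rule Bochner_Integration.integrable_bound[OF assms(1)])
  show "(\<lambda>x. h x * k x) \<in> borel_measurable M"
    using assms by (intro borel_measurable_times) (auto intro: borel_measurable_integrable)
  show "AE x in M. norm (h x * k x) \<le> norm (h x)"
    using assms(3) by (auto simp: norm_mult intro!: mult_left_le)
qed

lemma integrable_sum_sq:
  fixes u :: "'b \<Rightarrow> 'a \<Rightarrow> real"
  assumes "finite B" "\<And>a. a \<in> B \<Longrightarrow> integrable M (\<lambda>y. (u a y)\<^sup>2)" "\<And>a. a \<in> B \<Longrightarrow> u a \<in> borel_measurable M"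
  shows "integrable M (\<lambda>y. (\<Sum>a\<in>B. u a y)\<^sup>2)"
proof (rule Bochner_Integration.integrable_bound)
  show "integrable M (\<lambda>y. (\<Sum>a\<in>B. (u a y)\<^sup>2) * card B)"
    using assms by (intro integrable_mult_left integrable_sum) auto
  show "(\<lambda>y. (\<Sum>a\<in>B. u a y)\<^sup>2) \<in> borel_measurable M"
    using assms by measurable
  show "AE y in M. norm ((\<Sum>a\<in>B. u a y)\<^sup>2) \<le> norm ((\<Sum>a\<in>B. (u a y)\<^sup>2) * card B)"
  proof (intro AE_I2)
    fix y
    have "0 \<le> (\<Sum>a\<in>B. (u a y)\<^sup>2) * card B" by (intro mult_nonneg_nonneg sum_nonneg) auto
    then show "norm ((\<Sum>a\<in>B. u a y)\<^sup>2) \<le> norm ((\<Sum>a\<in>B. (u a y)\<^sup>2) * card B)"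
      using sum_squared_le_sum_of_squares[of "\<lambda>a. u a y" B] by simp
  qed
qed


lemma delta_empty_not_prob:
  assumes "prob_space (delta_set ({} :: (real^'n) set))" shows False
proof -
  have "delta_set ({} :: (real^'n) set) = null_measure borel"
    by (simp add: delta_set_def null_measure_def)
  moreover have "emeasure (delta_set ({} :: (real^'n) set)) (space (delta_set ({} :: (real^'n) set))) = 1"
    by (rule prob_space.emeasure_space_1[OF assms])
  ultimately show False by simp
qed

theorem corollary2p5:
  fixes A :: "(real^'n) set" and \<nu> :: "(real^'n) measure"
  assumes "finite A" and "A \<subseteq> int_lattice"
    and "spectral (delta_set A)"
    and "prob_space \<nu>" and "sets \<nu> = sets borel"
    and "countable \<Lambda>" and "\<Lambda> \<subseteq> int_lattice" and "is_spectrum \<nu> \<Lambda>"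
  shows "spectral (delta_set A \<star> \<nu>)"
proof -
  note fin = assms(1) and AZ = assms(2) and P = assms(4) and S = assms(5)
  have Ane: "A \<noteq> {}"
  proof
    assume "A = {}"
    then have "prob_space (delta_set ({} :: (real^'n) set))" using assms(3) unfolding spectral_def by simp
    then show False by (rule delta_empty_not_prob)
  qed
  obtain \<Gamma> where G: "countable \<Gamma>" "is_spectrum (delta_set A) \<Gamma>"
    using assms(3) unfolding spectral_def by blast
  note spG = G(2)[unfolded is_spectrum_def]
  note spL = assms(8)[unfolded is_spectrum_def]
  define mu where "mu = (delta_set A \<star> \<nu>)"
  define L where "L = (\<lambda>(g, l). g + l) ` (\<Gamma> \<times> \<Lambda>)"
  interpret N: prob_space \<nu> by fact
  interpret D: prob_space "delta_set A" using delta_prob fin Ane by blast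
  have Ds[measurable_cong]: "sets (delta_set A) = sets borel" using delta_prob fin Ane by blast
  have Ns[measurable_cong]: "sets \<nu> = sets borel" by fact
  have Pmu: "prob_space mu"
    unfolding mu_def convolution_def
    by (rule prob_space.prob_space_distr[OF prob_space_pair[OF D.prob_space_axioms P]]) measurable
  interpret M: prob_space mu by (rule Pmu)
  have Ms: "sets mu = sets borel" by (simp add: mu_def)
  have cL: "countable L" unfolding L_def using G(1) assms(6) by auto
  have cardpos: "card A > 0" using fin Ane by (simp add: card_gt_0_iff)
  have bdd_int: "integrable mu h" if "h \<in> borel_measurable borel" "\<And>x. cmod (h x) \<le> 1" for h :: "real^'n \<Rightarrow> complex"
    using that by (intro M.integrable_const_bound[of _ 1]) (auto simp: mu_def)
  have conv_int: "(\<integral>x. h x \<partial>mu) = (\<Sum>a\<in>A. \<integral>y. h (a + y) \<partial>\<nu>) / of_nat (card A)"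
    if "h \<in> borel_measurable borel" "integrable mu h" for h :: "real^'n \<Rightarrow> complex"
    using conv_integral[OF fin Ane P S that(1)] that(2) by (simp add: mu_def)

  have orth: "(\<integral>x. expo l x * cnj (expo l' x) \<partial>mu) = (if l = l' then 1 else 0)"
    if lL: "l \<in> L" and l'L: "l' \<in> L" for l l'
  proof (cases "l = l'")
    case True
    then show ?thesis by (simp add: M.prob_space)
  next
    case False
    obtain g m where gm: "g \<in> \<Gamma>" "m \<in> \<Lambda>" "l = g + m" using lL unfolding L_def by auto
    obtain g' m' where gm': "g' \<in> \<Gamma>" "m' \<in> \<Lambda>" "l' = g' + m'" using l'L unfolding L_def by auto
    define I where "I = (\<integral>y. expo l y * cnj (expo l' y) \<partial>\<nu>)"
    have pt: "expo l (a + y) * cnj (expo l' (a + y)) = (expo g a * cnj (expo g' a)) * (expo l y * cnj (expo l' y))"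
      if "a \<in> A" for a y
    proof -
      have "expo m a = 1" "expo m' a = 1" using gm gm' that AZ assms(7) by (auto intro!: expo_int)
      then show ?thesis using gm(3) gm'(3) by (simp add: expo_add_right expo_add_left mult_ac)
    qed
    have "(\<integral>x. expo l x * cnj (expo l' x) \<partial>mu) = (\<Sum>a\<in>A. \<integral>y. expo l (a + y) * cnj (expo l' (a + y)) \<partial>\<nu>) / of_nat (card A)"
      by (intro conv_int bdd_int) (auto simp: norm_mult)
    also have "\<dots> = (\<Sum>a\<in>A. (expo g a * cnj (expo g' a)) * I) / of_nat (card A)"
      unfolding I_def by (intro arg_cong2[where f="(/)"] sum.cong refl) (simp add: pt)
    also have "\<dots> = ((\<Sum>a\<in>A. expo g a * cnj (expo g' a)) / of_nat (card A)) * I"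
      by (simp add: sum_distrib_right)
    also have "(\<Sum>a\<in>A. expo g a * cnj (expo g' a)) / of_nat (card A) = (\<integral>x. expo g x * cnj (expo g' x) \<partial>delta_set A)"
      by (rule delta_integral[OF fin Ane, symmetric]) measurable
    also have "\<dots> * I = 0"
    proof (cases "g = g'")
      case True
      then have "m \<noteq> m'" using False gm(3) gm'(3) by auto
      have "I = (\<integral>y. expo m y * cnj (expo m' y) \<partial>\<nu>)"
        unfolding I_def gm(3) gm'(3) True
        by (intro Bochner_Integration.integral_cong refl expo_cancel)
      also have "\<dots> = 0" using conjunct1[OF spL] gm(2) gm'(2) \<open>m \<noteq> m'\<close> by auto
      finally show ?thesis by simp
    next
      case False
      then show ?thesis using conjunct1[OF spG] gm(1) gm'(1) by auto
    qed
    finally show ?thesis using \<open>l \<noteq> l'\<close> by simp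
  qed

  have compl: "AE x in mu. f x = 0"
    if fm: "f \<in> borel_measurable mu" and f2: "integrable mu (\<lambda>x. (cmod (f x))\<^sup>2)"
      and fo: "\<forall>l\<in>L. (\<integral>x. f x * cnj (expo l x) \<partial>mu) = 0" for f :: "real^'n \<Rightarrow> complex"
  proof -
    have fb[measurable]: "f \<in> borel_measurable borel" using fm by (simp add: mu_def)
    have fi: "integrable mu f" by (rule L2_integrable[OF Pmu fm f2])
    have em: "(\<lambda>x. cnj (expo l x)) \<in> borel_measurable mu" for l
      unfolding mu_def measurable_convolution2 by measurable
    have fai: "integrable \<nu> (\<lambda>y. f (a + y))" if "a \<in> A" for a
      using conv_integrable_shift[OF fin Ane P S fb _ that] fi by (simp add: mu_def)
    have fai2: "integrable \<nu> (\<lambda>y. (cmod (f (a + y)))\<^sup>2)" if "a \<in> A" for a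
      using conv_integrable_shift[OF fin Ane P S _ _ that, of "\<lambda>x. (cmod (f x))\<^sup>2"] f2 by (simp add: mu_def)
    define H where "H g y = (\<Sum>a\<in>A. cnj (expo g a) * f (a + y)) * cnj (expo g y)" for g y
    have Hm[measurable]: "H g \<in> borel_measurable \<nu>" for g unfolding H_def by measurable
    have H0: "AE y in \<nu>. H g y = 0" if g: "g \<in> \<Gamma>" for g
    proof -
      have "(\<integral>y. H g y * cnj (expo m y) \<partial>\<nu>) = 0" if m: "m \<in> \<Lambda>" for m
      proof -
        have gmL: "g + m \<in> L" using g m unfolding L_def by auto
        have pt: "f (a + y) * cnj (expo (g + m) (a + y)) = cnj (expo g a) * (f (a + y) * cnj (expo g y) * cnj (expo m y))"
          if "a \<in> A" for a y
        proof -
          have "expo m a = 1" using m that AZ assms(7) by (auto intro!: expo_int)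
          then show ?thesis by (simp add: expo_add_right expo_add_left mult_ac)
        qed
        have ii: "integrable \<nu> (\<lambda>y. f (a + y) * cnj (expo g y) * cnj (expo m y))" if "a \<in> A" for a
          using that by (intro integrable_mult_bdd fai) auto
        have "0 = (\<integral>x. f x * cnj (expo (g + m) x) \<partial>mu)" using fo gmL by simp
        also have "\<dots> = (\<Sum>a\<in>A. \<integral>y. f (a + y) * cnj (expo (g + m) (a + y)) \<partial>\<nu>) / of_nat (card A)"
          by (intro conv_int integrable_mult_bdd fi em) auto
        also have "(\<Sum>a\<in>A. \<integral>y. f (a + y) * cnj (expo (g + m) (a + y)) \<partial>\<nu>)
            = (\<Sum>a\<in>A. \<integral>y. cnj (expo g a) * (f (a + y) * cnj (expo g y) * cnj (expo m y)) \<partial>\<nu>)"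
          by (intro sum.cong refl Bochner_Integration.integral_cong) (simp_all add: pt)
        also have "\<dots> = (\<Sum>a\<in>A. cnj (expo g a) * (\<integral>y. f (a + y) * cnj (expo g y) * cnj (expo m y) \<partial>\<nu>))"
          by simp
        also have "\<dots> = (\<Sum>a\<in>A. \<integral>y. cnj (expo g a) * (f (a + y) * cnj (expo g y) * cnj (expo m y)) \<partial>\<nu>)"
          by simp
        also have "\<dots> = (\<integral>y. (\<Sum>a\<in>A. cnj (expo g a) * (f (a + y) * cnj (expo g y) * cnj (expo m y))) \<partial>\<nu>)"
          by (subst Bochner_Integration.integral_sum) (auto intro!: integrable_mult_right ii)
        also have "\<dots> = (\<integral>y. H g y * cnj (expo m y) \<partial>\<nu>)"
          unfolding H_def by (intro Bochner_Integration.integral_cong refl) (simp only: sum_distrib_right mult.assoc)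
        finally show ?thesis using cardpos by simp
      qed
      moreover have "integrable \<nu> (\<lambda>y. (cmod (H g y))\<^sup>2)"
      proof (rule Bochner_Integration.integrable_bound)
        show "integrable \<nu> (\<lambda>y. (\<Sum>a\<in>A. cmod (f (a + y)))\<^sup>2)"
          using fin fai2 by (intro integrable_sum_sq) auto
        show "(\<lambda>y. (cmod (H g y))\<^sup>2) \<in> borel_measurable \<nu>" by measurable
        show "AE y in \<nu>. norm ((cmod (H g y))\<^sup>2) \<le> norm ((\<Sum>a\<in>A. cmod (f (a + y)))\<^sup>2)"
        proof (intro AE_I2)
          fix y
          have "cmod (H g y) \<le> (\<Sum>a\<in>A. cmod (f (a + y)))"
          proof -
            have "cmod (H g y) = cmod (\<Sum>a\<in>A. cnj (expo g a) * f (a + y))"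
              unfolding H_def by (simp add: norm_mult)
            also have "\<dots> \<le> (\<Sum>a\<in>A. cmod (cnj (expo g a) * f (a + y)))" by (rule norm_sum)
            also have "\<dots> = (\<Sum>a\<in>A. cmod (f (a + y)))" by (simp add: norm_mult)
            finally show ?thesis .
          qed
          then show "norm ((cmod (H g y))\<^sup>2) \<le> norm ((\<Sum>a\<in>A. cmod (f (a + y)))\<^sup>2)"
            by (simp add: power_mono)
        qed
      qed
      ultimately show ?thesis using conjunct2[OF spL, rule_format, of "H g"] Hm[of g] by blast
    qed
    have "AE y in \<nu>. \<forall>g\<in>\<Gamma>. H g y = 0"
      using H0 G(1) by (simp add: AE_ball_countable)
    then have "AE y in \<nu>. \<forall>a\<in>A. f (a + y) = 0"
    proof (rule eventually_mono)
      fix y assume Hy: "\<forall>g\<in>\<Gamma>. H g y = 0"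
      define \<phi> where "\<phi> x = f (x + y)" for x
      have \<phi>m[measurable]: "\<phi> \<in> borel_measurable borel" unfolding \<phi>_def by measurable
      have "AE x in delta_set A. \<phi> x = 0"
      proof -
        have "(\<integral>x. \<phi> x * cnj (expo g x) \<partial>delta_set A) = 0" if g: "g \<in> \<Gamma>" for g
        proof -
          have "(\<integral>x. \<phi> x * cnj (expo g x) \<partial>delta_set A) = (\<Sum>a\<in>A. \<phi> a * cnj (expo g a)) / of_nat (card A)"
            by (rule delta_integral[OF fin Ane]) measurable
          also have "(\<Sum>a\<in>A. \<phi> a * cnj (expo g a)) = 0"
          proof -
            have "(\<Sum>a\<in>A. cnj (expo g a) * f (a + y)) * cnj (expo g y) = 0"
              using Hy g unfolding H_def by auto
            then have "(\<Sum>a\<in>A. cnj (expo g a) * f (a + y)) = 0" by simp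
            then show ?thesis unfolding \<phi>_def by (simp add: mult.commute)
          qed
          finally show ?thesis by simp
        qed
        moreover have "\<phi> \<in> borel_measurable (delta_set A)" by measurable
        moreover have "integrable (delta_set A) (\<lambda>x. (cmod (\<phi> x))\<^sup>2)"
          by (rule delta_integrable[OF fin Ane]) measurable
        ultimately show ?thesis using conjunct2[OF spG, rule_format, of \<phi>] by blast
      qed
      then show "\<forall>a\<in>A. f (a + y) = 0"
        using delta_AE[OF fin Ane, where P="\<lambda>x. \<phi> x = 0"] unfolding \<phi>_def by blast
    qed
    then show ?thesis
      unfolding mu_def by (rule conv_AE_zero[OF fin Ane P S fb])
  qed

  have "is_spectrum mu L"
    unfolding is_spectrum_def
  proof (intro conjI ballI allI impI)
    fix l l' assume "l \<in> L" "l' \<in> L"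
    then show "(\<integral>x. expo l x * cnj (expo l' x) \<partial>mu) = (if l = l' then 1 else 0)" by (rule orth)
  next
    fix f :: "real^'n \<Rightarrow> complex"
    assume "f \<in> borel_measurable mu \<and> integrable mu (\<lambda>x. (cmod (f x))\<^sup>2) \<and>
        (\<forall>l\<in>L. (\<integral>x. f x * cnj (expo l x) \<partial>mu) = 0)"
    then show "AE x in mu. f x = 0" by (elim conjE) (rule compl)
  qed
  then have "spectral mu"
    unfolding spectral_def using Pmu Ms cL by (intro conjI exI[of _ L]) auto
  then show ?thesis unfolding mu_def .
qed

end
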